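(* Let $n$ and $k$ be integers with $2\le k\le n-1$, and let $G$ be a connected graph with $n$ vertices. (a) If $\chi(G)=k$, then $\sigma_0(G)\ge 2-\frac{k-1}{n}$ and $\sigma_1(G)\ge 4n-3k+3$, and equality holds in either bound if and only if $G=K_{k-1}\vee\overline{K}_{n+1-k}$. (b) If $\omega(G)=k$, then the same two bounds hold, and equality holds in either bound if and only if $G$ has exactly $k-1$ dominating vertices.
   Context: All graphs are finite, simple, undirected. For a connected graph $G$ and $u\in V(G)$, $\varepsilon_G(u)=\max_{v} d_G(u,v)$; $\sigma_0(G)=\frac1{|V(G)|}\sum_u\varepsilon_G(u)$, $\sigma_1(G)=\sum_u\varepsilon_G(u)^2$. $\chi(G)$ is the chromatic number and $\omega(G)$ the clique number. A dominating vertex is a vertex adjacent to all other vertices. $K_r$ is the complete graph, $\overline{K}_r$ the edgeless graph on $r$ vertices, and $G\vee H$ (the join) is obtained from the disjoint union of $G$ and $H$ by adding all edges between $V(G)$ and $V(H)$. *)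

theory Defs
  imports Main "HOL.Real"
begin

type_synonym 'a sgraph = "'a set \<times> ('a \<Rightarrow> 'a \<Rightarrow> bool)"

definition verts :: "'a sgraph \<Rightarrow> 'a set" where "verts G = fst G"
definition adj :: "'a sgraph \<Rightarrow> 'a \<Rightarrow> 'a \<Rightarrow> bool" where "adj G = snd G"

definition simple_graph :: "'a sgraph \<Rightarrow> bool" where
  "simple_graph G \<longleftrightarrow> finite (verts G) \<and>
     (\<forall>u v. adj G u v \<longrightarrow> u \<in> verts G \<and> v \<in> verts G \<and> u \<noteq> v) \<and>
     (\<forall>u v. adj G u v \<longrightarrow> adj G v u)"

definition walk :: "'a sgraph \<Rightarrow> 'a list \<Rightarrow> bool" where
  "walk G xs \<longleftrightarrow> xs \<noteq> [] \<and> set xs \<subseteq> verts G \<and>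
     (\<forall>i. i + 1 < length xs \<longrightarrow> adj G (xs ! i) (xs ! (i + 1)))"

definition connected_graph :: "'a sgraph \<Rightarrow> bool" where
  "connected_graph G \<longleftrightarrow> verts G \<noteq> {} \<and>
     (\<forall>u\<in>verts G. \<forall>v\<in>verts G. \<exists>xs. walk G xs \<and> hd xs = u \<and> last xs = v)"

definition dist :: "'a sgraph \<Rightarrow> 'a \<Rightarrow> 'a \<Rightarrow> nat" where
  "dist G u v = (LEAST m. \<exists>xs. walk G xs \<and> hd xs = u \<and> last xs = v \<and> length xs = m + 1)"

definition ecc :: "'a sgraph \<Rightarrow> 'a \<Rightarrow> nat" where
  "ecc G u = Max ((\<lambda>v. dist G u v) ` verts G)"

definition sigma0 :: "'a sgraph \<Rightarrow> real" where
  "sigma0 G = (\<Sum>u\<in>verts G. real (ecc G u)) / real (card (verts G))"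

definition sigma1 :: "'a sgraph \<Rightarrow> nat" where
  "sigma1 G = (\<Sum>u\<in>verts G. (ecc G u)^2)"

definition proper_colouring :: "'a sgraph \<Rightarrow> nat \<Rightarrow> ('a \<Rightarrow> nat) \<Rightarrow> bool" where
  "proper_colouring G k c \<longleftrightarrow> c ` verts G \<subseteq> {0..<k} \<and>
     (\<forall>u\<in>verts G. \<forall>v\<in>verts G. adj G u v \<longrightarrow> c u \<noteq> c v)"

definition chromatic_number :: "'a sgraph \<Rightarrow> nat" where
  "chromatic_number G = (LEAST k. \<exists>c. proper_colouring G k c)"

definition is_clique :: "'a sgraph \<Rightarrow> 'a set \<Rightarrow> bool" where
  "is_clique G S \<longleftrightarrow> S \<subseteq> verts G \<and> (\<forall>u\<in>S. \<forall>v\<in>S. u \<noteq> v \<longrightarrow> adj G u v)"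

definition clique_number :: "'a sgraph \<Rightarrow> nat" where
  "clique_number G = Max {card S | S. is_clique G S}"

definition dominating_vertex :: "'a sgraph \<Rightarrow> 'a \<Rightarrow> bool" where
  "dominating_vertex G v \<longleftrightarrow> v \<in> verts G \<and> (\<forall>u\<in>verts G. u \<noteq> v \<longrightarrow> adj G v u)"

definition complete_graph :: "nat \<Rightarrow> nat sgraph" where
  "complete_graph r = ({0..<r}, \<lambda>u v. u < r \<and> v < r \<and> u \<noteq> v)"

definition edgeless_graph :: "nat \<Rightarrow> nat sgraph" where
  "edgeless_graph r = ({0..<r}, \<lambda>u v. False)"

definition graph_join :: "'a sgraph \<Rightarrow> 'b sgraph \<Rightarrow> ('a + 'b) sgraph" where
  "graph_join G H = (Inl ` verts G \<union> Inr ` verts H,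
     \<lambda>x y. case (x, y) of
        (Inl a, Inl b) \<Rightarrow> adj G a b
      | (Inr a, Inr b) \<Rightarrow> adj H a b
      | (Inl a, Inr b) \<Rightarrow> a \<in> verts G \<and> b \<in> verts H
      | (Inr a, Inl b) \<Rightarrow> a \<in> verts H \<and> b \<in> verts G)"

definition graph_iso :: "'a sgraph \<Rightarrow> 'b sgraph \<Rightarrow> bool" where
  "graph_iso G H \<longleftrightarrow> (\<exists>f. bij_betw f (verts G) (verts H) \<and>
     (\<forall>u\<in>verts G. \<forall>v\<in>verts G. adj G u v \<longleftrightarrow> adj H (f u) (f v)))"

end

theory Submission
  imports Defs
begin

lemma sg_fin: "simple_graph G \<Longrightarrow> finite (verts G)"
  unfolding simple_graph_def by blast
lemma sg_sym: "simple_graph G \<Longrightarrow> adj G u v \<Longrightarrow> adj G v u"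
  unfolding simple_graph_def by blast
lemma sg_ne: "simple_graph G \<Longrightarrow> adj G u v \<Longrightarrow> u \<noteq> v"
  unfolding simple_graph_def by blast

lemma walk1: "u \<in> verts G \<Longrightarrow> walk G [u]"
  by (simp add: walk_def)

lemma walk2: "simple_graph G \<Longrightarrow> adj G u v \<Longrightarrow> walk G [u,v]"
  unfolding walk_def simple_graph_def
  by (auto simp: less_Suc_eq)

lemma walk3: "simple_graph G \<Longrightarrow> adj G u w \<Longrightarrow> adj G w v \<Longrightarrow> walk G [u,w,v]"
  unfolding walk_def simple_graph_def
  by (auto simp: less_Suc_eq)

lemma dist_le_walk:
  assumes "walk G xs" "hd xs = u" "last xs = v"
  shows "dist G u v \<le> length xs - 1"
proof -
  have "length xs \<noteq> 0" using assms(1) by (simp add: walk_def)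
  then have "\<exists>ys. walk G ys \<and> hd ys = u \<and> last ys = v \<and> length ys = (length xs - 1) + 1"
    using assms by (intro exI[of _ xs]) auto
  then show ?thesis unfolding dist_def by (rule Least_le)
qed

lemma dist_ex:
  assumes "connected_graph G" "u \<in> verts G" "v \<in> verts G"
  shows "\<exists>xs. walk G xs \<and> hd xs = u \<and> last xs = v \<and> length xs = dist G u v + 1"
proof -
  obtain xs where xs: "walk G xs" "hd xs = u" "last xs = v"
    using assms unfolding connected_graph_def by blast
  then have "length xs \<noteq> 0" by (simp add: walk_def)
  then have "\<exists>m. \<exists>ys. walk G ys \<and> hd ys = u \<and> last ys = v \<and> length ys = m + 1"
    using xs by (intro exI[of _ "length xs - 1"] exI[of _ xs]) auto
  then show ?thesis unfolding dist_def by (rule LeastI_ex)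
qed

lemma dist_le1:
  assumes "connected_graph G" "u \<in> verts G" "v \<in> verts G" "dist G u v \<le> 1"
  shows "u = v \<or> adj G u v"
proof -
  obtain xs where xs: "walk G xs" "hd xs = u" "last xs = v" "length xs = dist G u v + 1"
    using dist_ex[OF assms(1-3)] by blast
  show ?thesis
  proof (cases "dist G u v = 0")
    case True
    then obtain a where "xs = [a]" using xs(4) by (cases xs) auto
    then show ?thesis using xs by auto
  next
    case False
    then have "length xs = 2" using xs(4) assms(4) by auto
    then obtain a b where ab: "xs = [a,b]"
      by (cases xs; cases "tl xs") auto
    have "adj G (xs!0) (xs!(0+1))" using xs(1) ab unfolding walk_def by auto
    then show ?thesis using xs ab by auto
  qed
qed

lemma ecc_ge:
  assumes "simple_graph G" "v \<in> verts G"
  shows "dist G u v \<le> ecc G u"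
  unfolding ecc_def using assms by (auto simp: simple_graph_def intro!: Max_ge)

lemma ecc_le:
  assumes "simple_graph G" "verts G \<noteq> {}" "\<And>v. v \<in> verts G \<Longrightarrow> dist G u v \<le> b"
  shows "ecc G u \<le> b"
  unfolding ecc_def using assms by (auto simp: simple_graph_def)

lemma ecc_dom:
  assumes "simple_graph G" "connected_graph G" "dominating_vertex G u" "card (verts G) \<ge> 2"
  shows "ecc G u = 1"
proof -
  have u: "u \<in> verts G" using assms(3) by (simp add: dominating_vertex_def)
  have le: "ecc G u \<le> 1"
  proof (rule ecc_le[OF assms(1)])
    show "verts G \<noteq> {}" using u by auto
    fix v assume v: "v \<in> verts G"
    show "dist G u v \<le> 1"
    proof (cases "u = v")
      case True
      then show ?thesis using dist_le_walk[OF walk1[OF u], of u v] by simp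
    next
      case False
      then have "adj G u v" using assms(3) v by (simp add: dominating_vertex_def)
      then show ?thesis using dist_le_walk[OF walk2[OF assms(1)], of u v u v] by simp
    qed
  qed
  have "\<exists>v\<in>verts G. v \<noteq> u"
  proof (rule ccontr)
    assume "\<not> ?thesis"
    then have "verts G \<subseteq> {u}" by auto
    then have "card (verts G) \<le> 1" using card_mono[of "{u}" "verts G"] by auto
    then show False using assms(4) by simp
  qed
  then obtain v where v: "v \<in> verts G" "v \<noteq> u" by blast
  have "dist G u v \<noteq> 0"
  proof
    assume "dist G u v = 0"
    then have "u = v \<or> adj G u v" using dist_le1[OF assms(2) u v(1)] by simp
    moreover obtain xs where "walk G xs" "hd xs = u" "last xs = v" "length xs = dist G u v + 1"
      using dist_ex[OF assms(2) u v(1)] by blast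
    ultimately show False using \<open>dist G u v = 0\<close> v(2) by (cases xs) auto
  qed
  then have "1 \<le> ecc G u" using ecc_ge[OF assms(1) v(1), of u] by simp
  with le show ?thesis by simp
qed

lemma ecc_nondom:
  assumes "simple_graph G" "connected_graph G" "u \<in> verts G" "\<not> dominating_vertex G u"
  shows "2 \<le> ecc G u"
proof -
  obtain v where v: "v \<in> verts G" "v \<noteq> u" "\<not> adj G u v"
    using assms(3,4) by (auto simp: dominating_vertex_def)
  have "\<not> dist G u v \<le> 1" using dist_le1[OF assms(2,3) v(1)] v by auto
  then show ?thesis using ecc_ge[OF assms(1) v(1), of u] by simp
qed

lemma ecc_le2:
  assumes "simple_graph G" "dominating_vertex G w" "u \<in> verts G"
  shows "ecc G u \<le> 2"
proof (rule ecc_le[OF assms(1)])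
  show "verts G \<noteq> {}" using assms(3) by auto
  fix v assume v: "v \<in> verts G"
  have w: "w \<in> verts G" "\<And>x. x \<in> verts G \<Longrightarrow> x \<noteq> w \<Longrightarrow> adj G w x"
    using assms(2) by (auto simp: dominating_vertex_def)
  have sym: "\<And>a b. adj G a b \<Longrightarrow> adj G b a" using assms(1) by (simp add: simple_graph_def)
  show "dist G u v \<le> 2"
  proof (cases "u = v")
    case True
    then show ?thesis using dist_le_walk[OF walk1[OF assms(3)], of u v] by simp
  next
    case False
    show ?thesis
    proof (cases "u = w \<or> v = w")
      case True
      then have "adj G u v" using w sym False v assms(3) by auto
      then show ?thesis using dist_le_walk[OF walk2[OF assms(1)], of u v u v] by simp
    next
      case False
      then have "adj G u w" "adj G w v" using w sym v assms(3) by auto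
      then show ?thesis using dist_le_walk[OF walk3[OF assms(1)], of u w v u v] by simp
    qed
  qed
qed



lemma core:
  assumes sg: "simple_graph G" and cg: "connected_graph G" and n: "card (verts G) = n"
    and n2: "2 \<le> n" and k2: "2 \<le> k" and dk: "card {v. dominating_vertex G v} \<le> k - 1"
  shows "sigma0 G \<ge> 2 - (real k - 1) / real n \<and>
            int (sigma1 G) \<ge> 4 * int n - 3 * int k + 3 \<and>
            (sigma0 G = 2 - (real k - 1) / real n \<longleftrightarrow> card {v. dominating_vertex G v} = k - 1) \<and>
            (int (sigma1 G) = 4 * int n - 3 * int k + 3 \<longleftrightarrow> card {v. dominating_vertex G v} = k - 1)"
proof -
  define V where "V = verts G"
  define D where "D = {v. dominating_vertex G v}"
  define d where "d = card D"
  have fin: "finite V" using sg by (simp add: simple_graph_def V_def)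
  have DV: "D \<subseteq> V" by (auto simp: D_def V_def dominating_vertex_def)
  have finD: "finite D" using fin DV finite_subset by blast
  have cardB: "card (V - D) = n - d" using card_Diff_subset[OF finD DV] n by (simp add: V_def d_def)
  have dn: "d \<le> n" using card_mono[OF fin DV] n by (simp add: V_def d_def)
  have e1: "\<And>u. u \<in> D \<Longrightarrow> ecc G u = 1" using ecc_dom[OF sg cg] n2 n by (auto simp: D_def)
  have e2: "\<And>u. u \<in> V - D \<Longrightarrow> 2 \<le> ecc G u" using ecc_nondom[OF sg cg] by (auto simp: D_def V_def)
  have e3: "D \<noteq> {} \<Longrightarrow> u \<in> V \<Longrightarrow> ecc G u \<le> 2" for u using ecc_le2[OF sg] by (auto simp: D_def V_def)
  have splitS: "(\<Sum>u\<in>V. f u) = (\<Sum>u\<in>D. f u) + (\<Sum>u\<in>V - D. f u)" for f :: "'a \<Rightarrow> nat"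
    using sum.subset_diff[OF DV fin] by (simp add: add.commute)
  define S0 where "S0 = (\<Sum>u\<in>V. ecc G u)"
  define T0 where "T0 = (\<Sum>u\<in>V - D. ecc G u)"
  define T1 where "T1 = (\<Sum>u\<in>V - D. (ecc G u)^2)"
  have S0: "S0 = d + T0" unfolding S0_def T0_def using splitS[of "ecc G"] e1 by (simp add: d_def)
  have S1: "sigma1 G = d + T1" unfolding sigma1_def T1_def
    using splitS[of "\<lambda>u. (ecc G u)^2"] e1 by (simp add: d_def V_def)
  have T0ge: "2 * (n - d) \<le> T0"
    unfolding T0_def using sum_mono[of "V - D" "\<lambda>_. 2" "ecc G"] e2 cardB by simp
  have T1ge: "4 * (n - d) \<le> T1"
  proof -
    have "\<And>u. u \<in> V - D \<Longrightarrow> (4::nat) \<le> (ecc G u)^2"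
    proof -
      fix u assume "u \<in> V - D"
      then have "2 \<le> ecc G u" by (rule e2)
      then have "2^2 \<le> (ecc G u)^2" by (rule power_mono) simp
      then show "(4::nat) \<le> (ecc G u)^2" by simp
    qed
    then show ?thesis
      unfolding T1_def using sum_mono[of "V - D" "\<lambda>_. 4" "\<lambda>u. (ecc G u)^2"] cardB by simp
  qed
  have T0eq: "D \<noteq> {} \<Longrightarrow> T0 = 2 * (n - d)"
  proof -
    assume "D \<noteq> {}"
    then have "\<And>u. u \<in> V - D \<Longrightarrow> ecc G u = 2" using e2 e3 by (meson DiffD1 le_antisym)
    then show ?thesis unfolding T0_def using cardB by simp
  qed
  have T1eq: "D \<noteq> {} \<Longrightarrow> T1 = 4 * (n - d)"
  proof -
    assume "D \<noteq> {}"
    then have "\<And>u. u \<in> V - D \<Longrightarrow> ecc G u = 2" using e2 e3 by (meson DiffD1 le_antisym)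
    then show ?thesis unfolding T1_def using cardB by simp
  qed
  have dk': "d \<le> k - 1" using dk by (simp add: d_def D_def)
  have npos: "real n > 0" using n2 by simp
  have sig0: "sigma0 G = real S0 / real n" unfolding sigma0_def S0_def V_def using n by simp
  have eqv0: "sigma0 G = 2 - (real k - 1) / real n \<longleftrightarrow> real S0 = 2 * real n - (real k - 1)"
    using npos unfolding sig0 by (simp add: field_simps)
  have rw: "2 - (real k - 1)/real n = (2*real n - (real k - 1))/real n" using npos by (simp add: field_simps)
  have ge0: "sigma0 G \<ge> 2 - (real k - 1) / real n \<longleftrightarrow> real S0 \<ge> 2 * real n - (real k - 1)"
    using npos unfolding sig0 rw by (simp add: divide_le_cancel)
  show ?thesis
  proof (cases "d = k - 1")
    case True
    then have "D \<noteq> {}" using k2 by (auto simp: d_def)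
    then have a: "T0 = 2 * (n - d)" "T1 = 4 * (n - d)" using T0eq T1eq by auto
    have r: "real S0 = 2 * real n - (real k - 1)" using S0 a True dn k2 by (simp add: of_nat_diff)
    have i: "int (sigma1 G) = 4 * int n - 3 * int k + 3" using S1 a True dn k2 by (simp add: of_nat_diff)
    show ?thesis using r i eqv0 ge0 True by (simp add: d_def D_def)
  next
    case False
    then have lt: "d < k - 1" using dk' by simp
    then have "d + 1 < k" by simp
    then have lt2: "real d + 1 < real k" "int d + 1 < int k" by linarith+
    have r: "real S0 > 2 * real n - (real k - 1)"
    proof -
      have "real S0 \<ge> real d + 2 * (real n - real d)" using S0 T0ge dn
        by (metis of_nat_add of_nat_diff of_nat_le_iff of_nat_mult of_nat_numeral add_le_cancel_left)
      then show ?thesis using lt2 by argo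
    qed
    have i: "int (sigma1 G) > 4 * int n - 3 * int k + 3"
    proof -
      have "int (sigma1 G) \<ge> int d + 4 * (int n - int d)" using S1 T1ge dn
        by (metis of_nat_add of_nat_diff of_nat_le_iff of_nat_mult of_nat_numeral add_le_cancel_left)
      then show ?thesis using lt2 by (simp add: algebra_simps)
    qed
    show ?thesis using r i eqv0 ge0 False by (auto simp: d_def D_def)
  qed
qed



lemma clique_fin: "simple_graph G \<Longrightarrow> is_clique G S \<Longrightarrow> finite S"
  unfolding simple_graph_def is_clique_def using finite_subset by blast

lemma clique_le_omega:
  assumes "simple_graph G" "is_clique G S"
  shows "card S \<le> clique_number G"
proof -
  have "{card S |S. is_clique G S} \<subseteq> card ` Pow (verts G)"
    unfolding is_clique_def by blast
  moreover have "finite (verts G)" using assms(1) by (simp add: simple_graph_def)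
  ultimately have "finite {card S |S. is_clique G S}" using finite_subset by blast
  moreover have "card S \<in> {card S |S. is_clique G S}" using assms(2) by blast
  ultimately show ?thesis unfolding clique_number_def by (rule Max_ge)
qed

lemma chrom_col:
  assumes "simple_graph G"
  shows "\<exists>c. proper_colouring G (chromatic_number G) c"
proof -
  have fin: "finite (verts G)" using assms by (simp add: simple_graph_def)
  obtain h where h: "bij_betw h (verts G) {0..<card (verts G)}"
    using ex_bij_betw_finite_nat[OF fin] by blast
  have inj: "inj_on h (verts G)" and im: "h ` verts G = {0..<card (verts G)}"
    using h by (auto simp: bij_betw_def)
  have "proper_colouring G (card (verts G)) h"
    unfolding proper_colouring_def
  proof (intro conjI ballI impI)
    show "h ` verts G \<subseteq> {0..<card (verts G)}" using im by simp
    fix u v assume uv: "u \<in> verts G" "v \<in> verts G" "adj G u v"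
    then have "u \<noteq> v" using assms by (simp add: simple_graph_def)
    then show "h u \<noteq> h v" using inj uv inj_onD by metis
  qed
  then have "\<exists>k c. proper_colouring G k c" by blast
  then show ?thesis unfolding chromatic_number_def by (rule LeastI_ex)
qed

lemma clique_le_chi:
  assumes "simple_graph G" "is_clique G S"
  shows "card S \<le> chromatic_number G"
proof -
  obtain c where c: "proper_colouring G (chromatic_number G) c" using chrom_col[OF assms(1)] by blast
  have inj: "inj_on c S" using c assms(2)
    unfolding proper_colouring_def is_clique_def inj_on_def by blast
  have "c ` S \<subseteq> {0..<chromatic_number G}" using c assms(2)
    unfolding proper_colouring_def is_clique_def by blast
  then have "card (c ` S) \<le> card {0..<chromatic_number G}" by (rule card_mono[rotated]) simp
  then show ?thesis using card_image[OF inj] by simp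
qed



lemma d_bound:
  assumes sg: "simple_graph G" and n: "card (verts G) = n"
    and cl: "\<And>S. is_clique G S \<Longrightarrow> card S \<le> k" and kn: "k < n"
  shows "card {v. dominating_vertex G v} \<le> k - 1"
proof -
  define D where "D = {v. dominating_vertex G v}"
  have fin: "finite (verts G)" using sg by (rule sg_fin)
  have DV: "D \<subseteq> verts G" by (auto simp: D_def dominating_vertex_def)
  have finD: "finite D" using fin DV finite_subset by blast
  have sym: "\<And>a b. adj G a b \<Longrightarrow> adj G b a" using sg by (rule sg_sym)
  have "\<exists>x\<in>verts G. x \<notin> D"
  proof (rule ccontr)
    assume "\<not> ?thesis"
    then have "\<forall>u\<in>verts G. u \<in> D" by blast
    then have "\<forall>u\<in>verts G. dominating_vertex G u" unfolding D_def by blast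
    then have "is_clique G (verts G)" unfolding is_clique_def dominating_vertex_def by (intro conjI subset_refl ballI impI) auto
    then have "card (verts G) \<le> k" by (rule cl)
    then show False using n kn by simp
  qed
  then obtain x where x: "x \<in> verts G" "x \<notin> D" by blast
  have "is_clique G (insert x D)"
    unfolding is_clique_def
  proof (intro conjI ballI impI)
    show "insert x D \<subseteq> verts G" using x DV by auto
    fix u v assume uv: "u \<in> insert x D" "v \<in> insert x D" "u \<noteq> v"
    show "adj G u v"
    proof (cases "u \<in> D")
      case True
      then have du: "dominating_vertex G u" unfolding D_def by blast
      have "v \<in> verts G" using uv(2) x(1) DV by blast
      then show ?thesis using du uv(3) unfolding dominating_vertex_def by auto
    next
      case False
      then have "u = x" "v \<in> D" using uv by auto
      then have "adj G v u" using uv x unfolding D_def dominating_vertex_def by blast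
      then show ?thesis by (rule sym)
    qed
  qed
  then have "card (insert x D) \<le> k" by (rule cl)
  moreover have "card (insert x D) = card D + 1" using finD x(2) by simp
  ultimately show ?thesis unfolding D_def[symmetric] by simp
qed



lemma join_dom:
  assumes "2 \<le> b"
  shows "{v. dominating_vertex (graph_join (complete_graph a) (edgeless_graph b)) v} = Inl ` {0..<a}"
proof -
  let ?J = "graph_join (complete_graph a) (edgeless_graph b)"
  have vJ: "verts ?J = Inl ` {0..<a} \<union> Inr ` {0..<b}"
    by (simp add: graph_join_def verts_def complete_graph_def edgeless_graph_def)
  have aJ: "adj ?J x y = (case (x, y) of
        (Inl a', Inl b') \<Rightarrow> a' < a \<and> b' < a \<and> a' \<noteq> b'
      | (Inr a', Inr b') \<Rightarrow> False
      | (Inl a', Inr b') \<Rightarrow> a' < a \<and> b' < b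
      | (Inr a', Inl b') \<Rightarrow> a' < b \<and> b' < a)" for x y
    by (simp add: graph_join_def verts_def adj_def complete_graph_def edgeless_graph_def split: sum.split)
  show ?thesis
  proof (intro set_eqI iffI)
    fix x assume "x \<in> {v. dominating_vertex ?J v}"
    then have d: "x \<in> verts ?J" "\<And>y. y \<in> verts ?J \<Longrightarrow> y \<noteq> x \<Longrightarrow> adj ?J x y"
      by (auto simp: dominating_vertex_def)
    show "x \<in> Inl ` {0..<a}"
    proof (cases x)
      case (Inl i) then show ?thesis using d(1) vJ by auto
    next
      case (Inr j)
      define j' where "j' = (if j = 0 then 1 else (0::nat))"
      have "Inr j' \<in> verts ?J" using vJ assms by (auto simp: j'_def)
      moreover have "Inr j' \<noteq> x" using Inr by (auto simp: j'_def)
      ultimately have "adj ?J x (Inr j')" using d(2) by blast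
      then show ?thesis using Inr aJ by simp
    qed
  next
    fix x :: "nat + nat" assume "x \<in> Inl ` {0..<a}"
    then obtain i where i: "x = Inl i" "i < a" by auto
    show "x \<in> {v. dominating_vertex ?J v}"
      unfolding dominating_vertex_def using i vJ
      by (auto simp: aJ)
  qed
qed



lemma iso_dom:
  assumes "graph_iso G H"
  shows "card {v. dominating_vertex G v} = card {v. dominating_vertex H v}"
proof -
  obtain f where f: "bij_betw f (verts G) (verts H)"
    "\<And>u v. u \<in> verts G \<Longrightarrow> v \<in> verts G \<Longrightarrow> adj G u v \<longleftrightarrow> adj H (f u) (f v)"
    using assms unfolding graph_iso_def by blast
  have inj: "inj_on f (verts G)" and img: "f ` verts G = verts H" using f(1) by (auto simp: bij_betw_def)
  have eq: "dominating_vertex G u \<longleftrightarrow> dominating_vertex H (f u)" if u: "u \<in> verts G" for u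
  proof
    assume "dominating_vertex G u"
    then show "dominating_vertex H (f u)"
      unfolding dominating_vertex_def using u img f(2) by auto
  next
    assume h: "dominating_vertex H (f u)"
    show "dominating_vertex G u"
      unfolding dominating_vertex_def
    proof (intro conjI ballI impI)
      show "u \<in> verts G" by (rule u)
      fix w assume w: "w \<in> verts G" "w \<noteq> u"
      then have "f w \<noteq> f u" using inj u by (auto dest: inj_onD)
      moreover have "f w \<in> verts H" using w img by auto
      ultimately have "adj H (f u) (f w)" using h by (auto simp: dominating_vertex_def)
      then show "adj G u w" using f(2)[OF u w(1)] by simp
    qed
  qed
  have DG: "{v. dominating_vertex G v} \<subseteq> verts G" by (auto simp: dominating_vertex_def)
  have "f ` {v. dominating_vertex G v} = {v. dominating_vertex H v}"
  proof (intro set_eqI iffI)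
    fix y assume "y \<in> f ` {v. dominating_vertex G v}"
    then show "y \<in> {v. dominating_vertex H v}" using eq DG by auto
  next
    fix y assume y: "y \<in> {v. dominating_vertex H v}"
    then have "y \<in> verts H" by (auto simp: dominating_vertex_def)
    then obtain u where "u \<in> verts G" "y = f u" using img by auto
    then show "y \<in> f ` {v. dominating_vertex G v}" using eq y by auto
  qed
  moreover have "inj_on f {v. dominating_vertex G v}" using inj DG inj_on_subset by blast
  ultimately show ?thesis using card_image by metis
qed




lemma mk_iso:
  assumes sg: "simple_graph G" and cV: "card (verts G) = a + b"
    and cD: "card {v. dominating_vertex G v} = a"
    and ind: "\<And>x y. x \<in> verts G \<Longrightarrow> y \<in> verts G \<Longrightarrow> \<not> dominating_vertex G x \<Longrightarrow>
                 \<not> dominating_vertex G y \<Longrightarrow> \<not> adj G x y"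
  shows "graph_iso G (graph_join (complete_graph a) (edgeless_graph b))"
proof -
  define V where "V = verts G"
  define D where "D = {v. dominating_vertex G v}"
  have fin: "finite V" using sg V_def sg_fin by blast
  have DV: "D \<subseteq> V" by (auto simp: D_def V_def dominating_vertex_def)
  have finD: "finite D" using fin DV finite_subset by blast
  have cB: "card (V - D) = b" using card_Diff_subset[OF finD DV] cV cD by (simp add: V_def D_def)
  obtain g where g: "bij_betw g D {0..<a}"
    using ex_bij_betw_finite_nat[OF finD] cD by (auto simp: D_def)
  obtain h where h: "bij_betw h (V - D) {0..<b}"
    using ex_bij_betw_finite_nat[of "V - D"] fin cB by auto
  have ginj: "inj_on g D" and gim: "g ` D = {0..<a}" using g by (auto simp: bij_betw_def)
  have hinj: "inj_on h (V - D)" and him: "h ` (V - D) = {0..<b}" using h by (auto simp: bij_betw_def)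
  define f where "f x = (if x \<in> D then Inl (g x) else Inr (h x))" for x
  let ?J = "graph_join (complete_graph a) (edgeless_graph b)"
  have vJ: "verts ?J = Inl ` {0..<a} \<union> Inr ` {0..<b}"
    by (simp add: graph_join_def verts_def complete_graph_def edgeless_graph_def)
  have aJ: "adj ?J x y = (case (x, y) of
        (Inl a', Inl b') \<Rightarrow> a' < a \<and> b' < a \<and> a' \<noteq> b'
      | (Inr a', Inr b') \<Rightarrow> False
      | (Inl a', Inr b') \<Rightarrow> a' < a \<and> b' < b
      | (Inr a', Inl b') \<Rightarrow> a' < b \<and> b' < a)" for x y
    by (simp add: graph_join_def verts_def adj_def complete_graph_def edgeless_graph_def split: sum.split)
  have bij: "bij_betw f V (verts ?J)"
    unfolding bij_betw_def
  proof
    show "inj_on f V"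
    proof (rule inj_onI)
      fix x y assume xy: "x \<in> V" "y \<in> V" "f x = f y"
      show "x = y"
      proof (cases "x \<in> D"; cases "y \<in> D")
        assume "x \<in> D" "y \<in> D"
        then show ?thesis using xy ginj by (auto simp: f_def dest: inj_onD)
      next
        assume "x \<notin> D" "y \<notin> D"
        then show ?thesis using xy hinj by (auto simp: f_def dest: inj_onD)
      qed (use xy in \<open>auto simp: f_def\<close>)
    qed
    show "f ` V = verts ?J"
    proof
      show "f ` V \<subseteq> verts ?J"
      proof
        fix z assume "z \<in> f ` V"
        then obtain x where x: "x \<in> V" "z = f x" by blast
        show "z \<in> verts ?J"
        proof (cases "x \<in> D")
          case True then show ?thesis using x gim vJ by (auto simp: f_def)
        next
          case False then show ?thesis using x him vJ by (auto simp: f_def)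
        qed
      qed
      show "verts ?J \<subseteq> f ` V"
      proof
        fix z assume "z \<in> verts ?J"
        then have "z \<in> Inl ` {0..<a} \<or> z \<in> Inr ` {0..<b}" using vJ by blast
        then show "z \<in> f ` V"
        proof
          assume "z \<in> Inl ` {0..<a}"
          then obtain x where "x \<in> D" "z = Inl (g x)" using gim by auto
          then show ?thesis using DV by (auto simp: f_def intro!: image_eqI[of _ _ x])
        next
          assume "z \<in> Inr ` {0..<b}"
          then obtain x where "x \<in> V - D" "z = Inr (h x)" using him by auto
          then show ?thesis by (auto simp: f_def intro!: image_eqI[of _ _ x])
        qed
      qed
    qed
  qed
  have adjeq: "adj G u v \<longleftrightarrow> adj ?J (f u) (f v)" if uv: "u \<in> V" "v \<in> V" for u v
  proof (cases "u \<in> D"; cases "v \<in> D")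
    assume u: "u \<in> D" and v: "v \<in> D"
    have "g u < a" "g v < a" using u v gim by auto
    moreover have "g u = g v \<longleftrightarrow> u = v" using u v ginj by (auto dest: inj_onD)
    moreover have "adj G u v \<longleftrightarrow> u \<noteq> v"
      using u uv sg_ne[OF sg] by (auto simp: D_def dominating_vertex_def V_def)
    ultimately show ?thesis using u v by (simp add: f_def aJ)
  next
    assume u: "u \<in> D" and v: "v \<notin> D"
    have "g u < a" "h v < b" using u v uv gim him by auto
    moreover have "u \<noteq> v" using u v by auto
    then have "adj G u v" using u uv(2) by (auto simp: D_def dominating_vertex_def V_def)
    ultimately show ?thesis using u v by (simp add: f_def aJ)
  next
    assume u: "u \<notin> D" and v: "v \<in> D"
    have "h u < b" "g v < a" using u v uv gim him by auto
    moreover have "u \<noteq> v" using u v by auto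
    then have "adj G v u" using v uv(1) by (auto simp: D_def dominating_vertex_def V_def)
    then have "adj G u v" by (rule sg_sym[OF sg])
    ultimately show ?thesis using u v by (simp add: f_def aJ)
  next
    assume u: "u \<notin> D" and v: "v \<notin> D"
    have "\<not> adj G u v" using ind u v uv by (auto simp: D_def V_def)
    then show ?thesis using u v by (simp add: f_def aJ)
  qed
  show ?thesis unfolding graph_iso_def using bij adjeq V_def by blast
qed


lemma dom_pair_clique:
  assumes sg: "simple_graph G" and x: "x \<in> verts G" "\<not> dominating_vertex G x"
    and y: "y \<in> verts G" "\<not> dominating_vertex G y" and xy: "adj G x y"
  shows "is_clique G (insert x (insert y {v. dominating_vertex G v}))"
  unfolding is_clique_def
proof (intro conjI ballI impI)
  show "insert x (insert y {v. dominating_vertex G v}) \<subseteq> verts G"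
    using x y by (auto simp: dominating_vertex_def)
  fix u v assume u: "u \<in> insert x (insert y {v. dominating_vertex G v})"
    and v: "v \<in> insert x (insert y {v. dominating_vertex G v})" and uv: "u \<noteq> v"
  have yx: "adj G y x" using sg_sym[OF sg xy] .
  have dv: "w \<in> verts G \<Longrightarrow> dominating_vertex G d \<Longrightarrow> w \<noteq> d \<Longrightarrow> adj G w d" for w d
    by (rule sg_sym[OF sg]) (auto simp: dominating_vertex_def)
  have dv2: "w \<in> verts G \<Longrightarrow> dominating_vertex G d \<Longrightarrow> w \<noteq> d \<Longrightarrow> adj G d w" for w d
    by (auto simp: dominating_vertex_def)
  show "adj G u v"
  proof (cases "dominating_vertex G u")
    case True
    have "v \<in> verts G" using v x y by (auto simp: dominating_vertex_def)
    then show ?thesis using dv2[OF _ True] uv by auto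
  next
    case False
    then have u': "u = x \<or> u = y" using u by auto
    show ?thesis
    proof (cases "dominating_vertex G v")
      case True
      have "u \<in> verts G" using u' x y by auto
      then show ?thesis using dv[OF _ True] uv by auto
    next
      case False
      then have "v = x \<or> v = y" using v by auto
      then show ?thesis using u' uv xy yx by auto
    qed
  qed
qed

theorem theorem4p2:
  fixes G :: "'a sgraph" and n k :: nat
  assumes "simple_graph G" and "connected_graph G" and "card (verts G) = n"
    and "2 \<le> k" and "k \<le> n - 1"
  shows "(chromatic_number G = k \<longrightarrow>
            sigma0 G \<ge> 2 - (real k - 1) / real n \<and>
            int (sigma1 G) \<ge> 4 * int n - 3 * int k + 3 \<and>
            (sigma0 G = 2 - (real k - 1) / real n \<longleftrightarrow>
               graph_iso G (graph_join (complete_graph (k - 1)) (edgeless_graph (n + 1 - k)))) \<and>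
            (int (sigma1 G) = 4 * int n - 3 * int k + 3 \<longleftrightarrow>
               graph_iso G (graph_join (complete_graph (k - 1)) (edgeless_graph (n + 1 - k)))))
       \<and> (clique_number G = k \<longrightarrow>
            sigma0 G \<ge> 2 - (real k - 1) / real n \<and>
            int (sigma1 G) \<ge> 4 * int n - 3 * int k + 3 \<and>
            (sigma0 G = 2 - (real k - 1) / real n \<longleftrightarrow>
               card {v. dominating_vertex G v} = k - 1) \<and>
            (int (sigma1 G) = 4 * int n - 3 * int k + 3 \<longleftrightarrow>
               card {v. dominating_vertex G v} = k - 1))"
proof -
  note sg = assms(1) and cg = assms(2) and n = assms(3) and k2 = assms(4) and kn1 = assms(5)
  have kn: "k < n" using k2 kn1 by linarith
  have n2: "2 \<le> n" using kn k2 by linarith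
  let ?J = "graph_join (complete_graph (k - 1)) (edgeless_graph (n + 1 - k))"
  show ?thesis
  proof (intro conjI impI)
    assume chi: "chromatic_number G = k"
    have db: "card {v. dominating_vertex G v} \<le> k - 1"
      by (rule d_bound[OF sg n _ kn]) (use clique_le_chi[OF sg] chi in auto)
    note C = core[OF sg cg n n2 k2 db]
    have iso: "card {v. dominating_vertex G v} = k - 1 \<longleftrightarrow> graph_iso G ?J"
    proof
      assume dk: "card {v. dominating_vertex G v} = k - 1"
      show "graph_iso G ?J"
      proof (rule mk_iso[OF sg _ dk])
        show "card (verts G) = k - 1 + (n + 1 - k)" using n kn k2 by simp
        fix x y assume x: "x \<in> verts G" "\<not> dominating_vertex G x"
          and y: "y \<in> verts G" "\<not> dominating_vertex G y"
        show "\<not> adj G x y"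
        proof
          assume xy: "adj G x y"
          have cl: "is_clique G (insert x (insert y {v. dominating_vertex G v}))"
            by (rule dom_pair_clique[OF sg x y xy])
          have "x \<noteq> y" using sg_ne[OF sg xy] .
          moreover have "finite {v. dominating_vertex G v}"
            using sg_fin[OF sg] finite_subset[of "{v. dominating_vertex G v}" "verts G"]
            by (auto simp: dominating_vertex_def)
          ultimately have "card (insert x (insert y {v. dominating_vertex G v})) = k + 1"
            using x(2) y(2) dk k2 by simp
          then show False using clique_le_chi[OF sg cl] chi by simp
        qed
      qed
    next
      assume "graph_iso G ?J"
      then have "card {v. dominating_vertex G v} = card {v. dominating_vertex ?J v}" by (rule iso_dom)
      also have "\<dots> = card (Inl ` {0..<k - 1} :: (nat + nat) set)"
        using join_dom[of "n + 1 - k" "k - 1"] kn by simp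
      also have "\<dots> = k - 1" by (simp add: card_image)
      finally show "card {v. dominating_vertex G v} = k - 1" .
    qed
    show "sigma0 G \<ge> 2 - (real k - 1) / real n" using C by blast
    show "int (sigma1 G) \<ge> 4 * int n - 3 * int k + 3" using C by blast
    show "sigma0 G = 2 - (real k - 1) / real n \<longleftrightarrow> graph_iso G ?J" using C iso by blast
    show "int (sigma1 G) = 4 * int n - 3 * int k + 3 \<longleftrightarrow> graph_iso G ?J" using C iso by blast
  next
    assume om: "clique_number G = k"
    have db: "card {v. dominating_vertex G v} \<le> k - 1"
      by (rule d_bound[OF sg n _ kn]) (use clique_le_omega[OF sg] om in auto)
    note C = core[OF sg cg n n2 k2 db]
    show "sigma0 G \<ge> 2 - (real k - 1) / real n" using C by blast
    show "int (sigma1 G) \<ge> 4 * int n - 3 * int k + 3" using C by blast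
    show "sigma0 G = 2 - (real k - 1) / real n \<longleftrightarrow> card {v. dominating_vertex G v} = k - 1" using C by blast
    show "int (sigma1 G) = 4 * int n - 3 * int k + 3 \<longleftrightarrow> card {v. dominating_vertex G v} = k - 1" using C by blast
  qed
qed

end
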